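(* Let $V$ be a finite set and $E^+,E^-\subseteq\binom{V}{2}$. Let \[ \hat{\mathcal{C}} := \{\hat X\in\mathbb{S}^{\{0\}\cup V}_+ : \hat X_{00}=1,\ \hat X_{ii}=\hat X_{0i}\ \forall i\in V,\ \hat X_{ij}\ge 0\ \forall ij\in E^+,\ \hat X_{ij}\le 0\ \forall ij\in E^-\}. \] Then a point $\hat X\in\hat{\mathcal{C}}$ is a vertex of $\hat{\mathcal{C}}$ if and only if $\operatorname{rank}(\hat X)=1$.
   Context: $0$ is a new index not in $V$. $\mathbb{S}^{W}_+$ denotes the real symmetric positive semidefinite matrices indexed by a finite set $W$, with trace inner product. $\binom{V}{2}$ is the set of 2-element subsets $ij=\{i,j\}$ of $V$. For a convex set $\mathcal{C}$ in a finite-dimensional space $\mathbb{E}$ and $\bar x\in\mathcal{C}$, the normal cone is $N_{\mathcal{C}}(\bar x):=\{c : \langle c,x\rangle\le\langle c,\bar x\rangle\ \forall x\in\mathcal{C}\}$; $\bar x$ is a vertex if $\dim N_{\mathcal{C}}(\bar x)=\dim\mathbb{E}$ (here $\mathbb{E}=\mathbb{S}^{\{0\}\cup V}$). *)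

theory Defs
  imports "HOL-Analysis.Analysis"
begin

text \<open>Matrices indexed by the finite type 'n, which plays the role of the index set
  {0} \<union> V; the distinguished element z of 'n is the new index 0, and V = UNIV - {z}.\<close>

definition sym_mats :: "(real^'n^'n) set" where
  "sym_mats = {A. transpose A = A}"

definition psd :: "real^'n^'n \<Rightarrow> bool" where
  "psd A \<longleftrightarrow> transpose A = A \<and> (\<forall>x. 0 \<le> x \<bullet> (A *v x))"

definition Chat :: "'n \<Rightarrow> 'n set set \<Rightarrow> 'n set set \<Rightarrow> (real^'n^'n) set" where
  "Chat z Ep Em = {X. psd X \<and> X $ z $ z = 1 \<and> (\<forall>i. i \<noteq> z \<longrightarrow> X $ i $ i = X $ z $ i)
      \<and> (\<forall>i j. {i, j} \<in> Ep \<longrightarrow> 0 \<le> X $ i $ j)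
      \<and> (\<forall>i j. {i, j} \<in> Em \<longrightarrow> X $ i $ j \<le> 0)}"

text \<open>Normal cone within the ambient space E (inner product on real^n^n is the trace
  inner product sum_ij A_ij B_ij).\<close>
definition normal_cone :: "'a::real_inner set \<Rightarrow> 'a set \<Rightarrow> 'a \<Rightarrow> 'a set" where
  "normal_cone E C x = {c \<in> E. \<forall>y\<in>C. c \<bullet> y \<le> c \<bullet> x}"

definition is_vertex :: "'a::euclidean_space set \<Rightarrow> 'a set \<Rightarrow> 'a \<Rightarrow> bool" where
  "is_vertex E C x \<longleftrightarrow> x \<in> C \<and> aff_dim (normal_cone E C x) = int (dim E)"

end

theory Submission
  imports Defs
begin


lemma inner_mat: "(X::real^'n^'m) \<bullet> Y = (\<Sum>i\<in>UNIV. \<Sum>j\<in>UNIV. X$i$j * Y$i$j)"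
  by (simp add: inner_vec_def)

lemma sym_form:
  fixes X :: "real^'n^'n"
  assumes "transpose X = X"
  shows "x \<bullet> (X *v y) = y \<bullet> (X *v x)"
proof -
  have s: "X$i$j = X$j$i" for i j using assms by (metis transpose_def vec_lambda_beta)
  have "x \<bullet> (X *v y) = (\<Sum>i\<in>UNIV. \<Sum>j\<in>UNIV. x$i * X$i$j * y$j)"
    by (simp add: inner_vec_def matrix_vector_mult_def sum_distrib_left mult.assoc)
  also have "\<dots> = (\<Sum>j\<in>UNIV. \<Sum>i\<in>UNIV. x$i * X$i$j * y$j)" by (rule sum.swap)
  also have "\<dots> = y \<bullet> (X *v x)"
    by (simp add: inner_vec_def matrix_vector_mult_def sum_distrib_left s mult.commute mult.left_commute)
  finally show ?thesis .
qed

lemma mv_axis: "(X *v axis i c) $ j = X$j$i * c"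
  by (simp add: matrix_vector_mult_def axis_def if_distrib cong: if_cong)

lemma form_axis: "axis i c \<bullet> (X *v axis i c) = X$i$i * c * c"
  by (simp add: inner_commute[of "axis i c"] inner_axis mv_axis)

lemma psd_diag: "psd X \<Longrightarrow> 0 \<le> X$i$i"
proof -
  assume "psd X"
  then have "0 \<le> axis i 1 \<bullet> (X *v axis i 1)" by (simp add: psd_def)
  then show ?thesis by (simp add: form_axis)
qed

lemma quad_lemma:
  fixes a b :: real
  assumes "\<forall>t. 0 \<le> 2*t*a + t^2*b"
  shows "a = 0"
proof (rule ccontr)
  assume "a \<noteq> 0"
  have b: "0 \<le> b" using assms[rule_format, of 1] assms[rule_format, of "-1"] by simp
  define t where "t = -a/(b+1)"
  have b1: "b + 1 > 0" using b by simp
  have "0 \<le> 2*t*a + t^2*b" using assms by blast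
  then have h0: "0 \<le> (b+1)^2 * (2*t*a + t^2*b)" using b1 by simp
  have tb: "t*(b+1) = -a" using b1 by (simp add: t_def)
  have "(b+1)^2 * (2*t*a + t^2*b) = 2*a*(b+1)*(t*(b+1)) + b*(t*(b+1))^2"
    by (simp add: algebra_simps power2_eq_square)
  also have "\<dots> = a^2*(-b-2)" unfolding tb by (simp add: algebra_simps power2_eq_square)
  also have "\<dots> < 0" using \<open>a\<noteq>0\<close> b by (simp add: mult_pos_neg)
  finally show False using h0 by simp
qed

lemma psd_zero_form:
  fixes X :: "real^'n^'n"
  assumes "psd X" and "x \<bullet> (X *v x) = 0"
  shows "X *v x = 0"
proof -
  have sy: "transpose X = X" using assms(1) by (simp add: psd_def)
  have "\<forall>t. 0 \<le> 2*t*((X*v x) \<bullet> (X *v x)) + t^2*((X*v x) \<bullet> (X *v (X *v x)))"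
  proof
    fix t
    have "0 \<le> (x + t *s (X*v x)) \<bullet> (X *v (x + t *s (X*v x)))"
      using assms(1) by (simp add: psd_def)
    also have "\<dots> = x \<bullet> (X *v x) + t * (x \<bullet> (X *v (X *v x))) + t * ((X *v x) \<bullet> (X *v x))
        + t^2 * ((X*v x) \<bullet> (X *v (X *v x)))"
      by (simp add: matrix_vector_right_distrib matrix_vector_mult_scaleR inner_add_left inner_add_right
          algebra_simps power2_eq_square scalar_mult_eq_scaleR)
    also have "x \<bullet> (X *v (X *v x)) = (X *v x) \<bullet> (X *v x)" using sym_form[OF sy] by blast
    finally show "0 \<le> 2*t*((X*v x) \<bullet> (X *v x)) + t^2*((X*v x) \<bullet> (X *v (X *v x)))"
      using assms(2) by simp
  qed
  then have "(X*v x) \<bullet> (X *v x) = 0" by (rule quad_lemma)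
  then show ?thesis by simp
qed

lemma psd_zero_diag:
  fixes X :: "real^'n^'n"
  assumes "psd X" "X$i$i = 0"
  shows "X$i$j = 0"
proof -
  have "axis i 1 \<bullet> (X *v axis i 1) = 0" using assms(2)
    by (simp add: form_axis)
  then have "X *v axis i 1 = 0" by (rule psd_zero_form[OF assms(1)])
  then have "X$j$i = 0" using mv_axis[of X i 1 j] by simp
  moreover have "transpose X = X" using assms(1) by (simp add: psd_def)
  ultimately show ?thesis by (metis transpose_def vec_lambda_beta)
qed



lemma row_eq: "row i (A::real^'n^'m) = A$i"
  by (simp add: row_def vec_eq_iff)

lemma rank_le1:
  fixes X :: "real^'n^'m"
  assumes "\<forall>i j. X$i$j = u$i * w$j"
  shows "rank X \<le> 1"
proof -
  have "rows X \<subseteq> span {w}"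
  proof
    fix r assume "r \<in> rows X"
    then obtain i where r: "r = X$i" by (auto simp: rows_def row_eq)
    have "r = u$i *\<^sub>R w" using assms by (simp add: r vec_eq_iff)
    then show "r \<in> span {w}" by (simp add: span_mul span_base)
  qed
  then have "dim (rows X) \<le> card {w}" by (rule dim_le_card) simp
  then show ?thesis by (simp add: row_rank_def)
qed

lemma rank_ne0:
  fixes X :: "real^'n^'m"
  assumes "X$i$j \<noteq> 0"
  shows "rank X \<noteq> 0"
proof
  assume "rank X = 0"
  then have "rows X \<subseteq> {0}" by (simp add: row_rank_def)
  moreover have "X$i \<in> rows X" by (auto simp: rows_def row_eq)
  ultimately have "X$i = 0" by auto
  then show False using assms by simp
qed

lemma rank1_rows:
  fixes X :: "real^'n^'m"
  assumes "rank X = 1"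
  obtains w k where "\<forall>i j. X$i$j = k i * w$j"
proof -
  obtain B where B: "B \<subseteq> rows X" "independent B" "rows X \<subseteq> span B" "card B = dim (rows X)"
    by (rule basis_exists)
  then have "card B = 1" using assms by (simp add: row_rank_def)
  then obtain w where Bw: "B = {w}" by (auto simp: card_Suc_eq)
  have "\<forall>i. \<exists>k. X$i = k *\<^sub>R w"
  proof
    fix i
    have "X$i \<in> rows X" by (auto simp: rows_def row_eq)
    then have "X$i \<in> span {w}" using B Bw by auto
    then show "\<exists>k. X$i = k *\<^sub>R w" by (auto simp: span_singleton scalar_mult_eq_scaleR)
  qed
  then obtain k where "\<forall>i. X$i = k i *\<^sub>R w" by metis
  then have "\<forall>i j. X$i$j = k i * w$j" by simp
  then show ?thesis by (rule that)
qed

lemma Chat_sym: "X \<in> Chat z Ep Em \<Longrightarrow> X$i$j = X$j$i"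
  by (simp add: Chat_def psd_def) (metis transpose_def vec_lambda_beta)

lemma rank1_factor:
  fixes X :: "real^'n^'n"
  assumes "rank X = 1" "X \<in> Chat z Ep Em"
  obtains x where "x$z = 1" "\<forall>i j. X$i$j = x$i * x$j" "\<forall>i. x$i = 0 \<or> x$i = 1"
proof -
  obtain w k where wk: "\<forall>i j. X$i$j = k i * w$j" using rank1_rows[OF assms(1)] by metis
  have zz: "X$z$z = 1" using assms(2) by (simp add: Chat_def)
  then have kz: "k z \<noteq> 0" using wk by auto
  define x where "x = X$z"
  have xz: "x$z = 1" using zz x_def by simp
  have xx: "X$i$j = x$i * x$j" for i j
  proof -
    have "X$i$z = X$z$i" by (rule Chat_sym[OF assms(2)])
    have e1: "X$i$j = k i * w$j" using wk by simp
    have e2: "x$j = k z * w$j" using wk x_def by simp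
    have e3: "x$i = k i * w$z" using wk x_def Chat_sym[OF assms(2), of z i] by simp
    have e4: "1 = k z * w$z" using wk zz by simp
    have "x$i * x$j = k i * w$z * (k z * w$j)" using e2 e3 by simp
    also have "\<dots> = k i * w$j * (k z * w$z)" by (simp add: algebra_simps)
    also have "\<dots> = X$i$j" using e1 e4 by simp
    finally show ?thesis by simp
  qed
  have "x$i = 0 \<or> x$i = 1" for i
  proof (cases "i = z")
    case True then show ?thesis using xz by simp
  next
    case False
    then have "X$i$i = X$z$i" using assms(2) by (simp add: Chat_def)
    then have "x$i * x$i = x$i" using xx xz by simp
    then show ?thesis by (metis mult_cancel_right2 mult_zero_left)
  qed
  then show ?thesis using that xz xx by blast
qed





definition symE :: "'n \<Rightarrow> 'n \<Rightarrow> real^'n^'n" where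
  "symE a b = (\<chi> i j. (if i = a \<and> j = b then 1 else 0) + (if i = b \<and> j = a then 1 else 0))"

definition outer :: "real^'n \<Rightarrow> real^'n^'n" where
  "outer u = (\<chi> i j. u$i * u$j)"

lemma trans_nth: "transpose A $ i $ j = A $ j $ i"
  by (simp add: transpose_def)
lemma sym_iff: "A \<in> sym_mats \<longleftrightarrow> (\<forall>i j. A$i$j = A$j$i)"
proof -
  have "transpose A = A \<longleftrightarrow> (\<forall>i j. transpose A $ i $ j = A$i$j)"
    by (simp add: vec_eq_iff)
  then show ?thesis unfolding sym_mats_def trans_nth by auto
qed


lemma symE_nth: "symE a b $ i $ j = (if i = a \<and> j = b then 1 else 0) + (if i = b \<and> j = a then 1 else 0)"
  unfolding symE_def by simp

lemma "(if i=a \<and> j=b then 1 else 0) + (if i=b \<and> j=a then 1 else 0) = (if j=a \<and> i=b then 1 else 0) + (if j=b \<and> i=a then (1::real) else 0)"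
  by (simp only: conj_commute add.commute simp_thms)
lemma symE_sym: "symE a b \<in> sym_mats"
  apply (subst sym_iff)
  apply (simp only: symE_nth)
  by (simp only: conj_commute add.commute simp_thms)

lemma outer_nth: "outer u $ i $ j = u$i * u$j"
  unfolding outer_def by simp

lemma outer_sym: "outer u \<in> sym_mats"
  unfolding sym_iff outer_nth by (simp add: mult.commute)

lemma subspace_sym: "subspace (sym_mats :: (real^'n^'n) set)"
  unfolding subspace_def
proof (intro conjI ballI allI)
  show "0 \<in> sym_mats" unfolding sym_iff by simp
  fix x y :: "real^'n^'n" assume "x \<in> sym_mats" "y \<in> sym_mats"
  then have "\<forall>i j. x$i$j = x$j$i" "\<forall>i j. y$i$j = y$j$i" using sym_iff by blast+
  then show "x + y \<in> sym_mats" unfolding sym_iff by simp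
next
  fix c and x :: "real^'n^'n" assume "x \<in> sym_mats"
  then have "\<forall>i j. x$i$j = x$j$i" using sym_iff by blast+
  then show "c *\<^sub>R x \<in> sym_mats" unfolding sym_iff by simp
qed

lemma inner_outer: "outer u \<bullet> Y = u \<bullet> (Y *v u)"
proof -
  have "outer u \<bullet> Y = (\<Sum>i\<in>UNIV. \<Sum>j\<in>UNIV. u$i * (Y$i$j * u$j))"
    unfolding inner_mat outer_nth by (simp add: mult_ac)
  also have "\<dots> = u \<bullet> (Y *v u)"
    by (simp add: inner_vec_def matrix_vector_mult_def sum_distrib_left)
  finally show ?thesis .
qed

lemma sum_delta1: "(\<Sum>j\<in>UNIV. (if j = b then 1 else 0) * ((f::'n::finite\<Rightarrow>real) j)) = f b"
proof -
  have "(\<Sum>j\<in>UNIV. (if j = b then 1 else 0) * f j) = (\<Sum>j\<in>UNIV. if j = b then f j else 0)"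
    by (rule sum.cong) simp_all
  then show ?thesis by simp
qed

lemma sum_delta2: "(\<Sum>i\<in>UNIV. \<Sum>j\<in>UNIV. (if i = a \<and> j = b then 1 else 0) * (Y::real^'n^'m)$i$j) = Y$a$b"
proof -
  have "(\<Sum>i\<in>UNIV. \<Sum>j\<in>UNIV. (if i = a \<and> j = b then 1 else 0) * Y$i$j)
      = (\<Sum>i\<in>UNIV. (if i = a then 1 else 0) * (\<Sum>j\<in>UNIV. (if j = b then 1 else 0) * Y$i$j))"
    unfolding sum_distrib_left by (intro sum.cong refl) simp
  also have "\<dots> = Y$a$b" by (simp only: sum_delta1)
  finally show ?thesis .
qed

lemma inner_symE: "symE a b \<bullet> Y = Y$a$b + Y$b$a"
proof -
  have "symE a b \<bullet> Y = (\<Sum>i\<in>UNIV. \<Sum>j\<in>UNIV. (if i = a \<and> j = b then 1 else 0) * Y$i$j)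
        + (\<Sum>i\<in>UNIV. \<Sum>j\<in>UNIV. (if i = b \<and> j = a then 1 else 0) * Y$i$j)"
    unfolding inner_mat symE_nth distrib_right sum.distrib ..
  then show ?thesis by (simp only: sum_delta2)
qed

lemma symE_comm: "symE a b = symE b a"
  unfolding symE_def by (simp only: conj_commute add.commute)

lemma sum_delta_ij: "(\<Sum>a\<in>UNIV. \<Sum>b\<in>UNIV. (f::'n::finite\<Rightarrow>'n\<Rightarrow>real) a b * (if i = a \<and> j = b then 1 else 0)) = (f i j :: real)"
proof -
  have "(\<Sum>a\<in>UNIV. \<Sum>b\<in>UNIV. f a b * (if i = a \<and> j = b then 1 else 0))
      = (\<Sum>a\<in>UNIV. (if a = i then 1 else 0) * (\<Sum>b\<in>UNIV. (if b = j then 1 else 0) * f a b))"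
    unfolding sum_distrib_left by (intro sum.cong refl) auto
  also have "\<dots> = f i j" by (simp only: sum_delta1)
  finally show ?thesis .
qed

lemma sym_decomp:
  fixes M :: "real^'n^'n"
  assumes "M \<in> sym_mats"
  shows "M = (\<Sum>a\<in>UNIV. \<Sum>b\<in>UNIV. (M$a$b / 2) *\<^sub>R symE a b)"
proof -
  have s: "M$i$j = M$j$i" for i j using assms sym_iff by blast
  have "(\<Sum>a\<in>UNIV. \<Sum>b\<in>UNIV. (M$a$b / 2) *\<^sub>R symE a b) $ i $ j = M$i$j" for i j
  proof -
    have e1: "(\<Sum>a\<in>UNIV. \<Sum>b\<in>UNIV. (M$a$b / 2) *\<^sub>R symE a b) $ i $ j
       = (\<Sum>a\<in>UNIV. \<Sum>b\<in>UNIV. (M$a$b / 2) * (if i = a \<and> j = b then 1 else 0))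
         + (\<Sum>a\<in>UNIV. \<Sum>b\<in>UNIV. (M$a$b / 2) * (if i = b \<and> j = a then 1 else 0))"
      unfolding sum_component vector_scaleR_component symE_nth real_scaleR_def distrib_left sum.distrib ..
    have e2: "(\<Sum>a\<in>UNIV. \<Sum>b\<in>UNIV. (M$a$b / 2) * (if i = b \<and> j = a then 1 else 0))
       = M$j$i/2"
      using sum_delta_ij[where f="\<lambda>a b. M$a$b/2" and i=j and j=i] by (simp only: conj_commute)
    have e3: "(\<Sum>a\<in>UNIV. \<Sum>b\<in>UNIV. (M$a$b / 2) * (if i = a \<and> j = b then 1 else 0))
       = M$i$j/2"
      by (rule sum_delta_ij[where f="\<lambda>a b. M$a$b/2"])
    show ?thesis unfolding e1 e2 e3 using s[of i j] by simp
  qed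
  then show ?thesis by (simp add: vec_eq_iff)
qed

lemma axis_nth: "axis a c $ i = (if i = a then c else 0)"
  by (simp add: axis_def)

lemma I1:
  fixes x :: "real^'n"
  assumes "a \<noteq> z"
  shows "2 *\<^sub>R outer (axis a 1 - x$a *\<^sub>R axis z 1)
     = symE a a - (2*x$a) *\<^sub>R symE a z + (x$a^2) *\<^sub>R symE z z"
proof -
  have "(2 *\<^sub>R outer (axis a 1 - x$a *\<^sub>R axis z 1)) $ i $ j
     = (symE a a - (2*x$a) *\<^sub>R symE a z + (x$a^2) *\<^sub>R symE z z) $ i $ j" for i j
    using assms
    by (cases "i = a"; cases "i = z"; cases "j = a"; cases "j = z")
       (simp_all add: outer_nth symE_nth axis_nth power2_eq_square)
  then show ?thesis by (simp add: vec_eq_iff)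
qed

lemma I2:
  fixes x :: "real^'n"
  assumes "a \<noteq> z" "b \<noteq> z" "a \<noteq> b"
  shows "outer ((axis a 1 - x$a *\<^sub>R axis z 1) + (axis b 1 - x$b *\<^sub>R axis z 1))
     = outer (axis a 1 - x$a *\<^sub>R axis z 1) + outer (axis b 1 - x$b *\<^sub>R axis z 1)
       + symE a b - x$b *\<^sub>R symE a z - x$a *\<^sub>R symE b z + (x$a * x$b) *\<^sub>R symE z z"
proof -
  have "(outer ((axis a 1 - x$a *\<^sub>R axis z 1) + (axis b 1 - x$b *\<^sub>R axis z 1))) $ i $ j
     = (outer (axis a 1 - x$a *\<^sub>R axis z 1) + outer (axis b 1 - x$b *\<^sub>R axis z 1)
       + symE a b - x$b *\<^sub>R symE a z - x$a *\<^sub>R symE b z + (x$a * x$b) *\<^sub>R symE z z) $ i $ j" for i j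
    using assms
    by (cases "i = a"; cases "i = b"; cases "i = z"; cases "j = a"; cases "j = b"; cases "j = z")
       (simp_all add: outer_nth symE_nth axis_nth algebra_simps)
  then show ?thesis by (simp add: vec_eq_iff)
qed


lemma span_real_mul: "v \<in> span S \<Longrightarrow> c *\<^sub>R v \<in> span S"
  by (simp add: span_mul)

lemma vertex_if_rank1:
  fixes X :: "real^'n^'n" and x :: "real^'n"
  assumes XC: "X \<in> Chat z Ep Em" and xz: "x$z = 1" and xx: "\<forall>i j. X$i$j = x$i * x$j"
    and xb: "\<forall>i. x$i = 0 \<or> x$i = 1"
  shows "is_vertex sym_mats (Chat z Ep Em) X"
proof -
  define N where "N = normal_cone sym_mats (Chat z Ep Em) X"
  have NS: "N \<subseteq> sym_mats" by (auto simp: N_def normal_cone_def)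
  have inN: "c \<in> N" if "c \<in> sym_mats" "\<And>Y. Y \<in> Chat z Ep Em \<Longrightarrow> c \<bullet> Y \<le> c \<bullet> X" for c
    using that by (auto simp: N_def normal_cone_def)
  have Cz: "Y$z$z = 1" if "Y \<in> Chat z Ep Em" for Y using that by (simp add: Chat_def)
  have Cd: "Y$i$i = Y$z$i" if "Y \<in> Chat z Ep Em" "i \<noteq> z" for Y i using that by (simp add: Chat_def)
  have Cs: "Y$i$j = Y$j$i" if "Y \<in> Chat z Ep Em" for Y i j using that by (rule Chat_sym)
  have Cp: "psd Y" if "Y \<in> Chat z Ep Em" for Y using that by (simp add: Chat_def)
  have n1: "symE z z \<in> N"
    by (rule inN[OF symE_sym]) (simp add: inner_symE Cz XC)
  have n2: "symE a a - symE z a \<in> N" if "a \<noteq> z" for a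
  proof (rule inN)
    show "symE a a - symE z a \<in> sym_mats"
      by (rule subspace_diff[OF subspace_sym symE_sym symE_sym])
    fix Y assume "Y \<in> Chat z Ep Em"
    then show "(symE a a - symE z a) \<bullet> Y \<le> (symE a a - symE z a) \<bullet> X"
      using Cd[OF _ that] Cs XC by (simp add: inner_diff_left inner_symE)
  qed
  have Xu: "u \<bullet> (X *v u) = (x \<bullet> u)^2" for u
  proof -
    have "(X *v u)$i = x$i * (x \<bullet> u)" for i
      by (simp add: matrix_vector_mult_def xx inner_vec_def sum_distrib_left mult.assoc)
    then have "X *v u = (x \<bullet> u) *\<^sub>R x" by (simp add: vec_eq_iff mult.commute)
    then show ?thesis by (simp add: power2_eq_square inner_commute)
  qed
  have n3: "- outer u \<in> N" if "x \<bullet> u = 0" for u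
  proof (rule inN)
    show "- outer u \<in> sym_mats" by (rule subspace_neg[OF subspace_sym outer_sym])
    fix Y assume "Y \<in> Chat z Ep Em"
    then have "0 \<le> u \<bullet> (Y *v u)" using Cp by (simp add: psd_def)
    then show "(- outer u) \<bullet> Y \<le> (- outer u) \<bullet> X"
      using Xu[of u] that by (simp add: inner_outer)
  qed
  define S where "S = span N"
  have o3: "outer u \<in> S" if "x \<bullet> u = 0" for u
    using span_neg[OF span_base[OF n3[OF that]]] by (simp add: S_def)
  define f :: "'n \<Rightarrow> real^'n" where "f a = axis a 1 - x$a *\<^sub>R axis z 1" for a
  have fx: "x \<bullet> f a = 0" if "a \<noteq> z" for a
    using xz by (simp add: f_def inner_diff_right inner_axis)
  have fx2: "x \<bullet> (f a + f b) = 0" if "a \<noteq> z" "b \<noteq> z" for a b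
    using fx[OF that(1)] fx[OF that(2)] by (simp add: inner_add_right)
  have Z: "symE z z \<in> S" unfolding S_def by (rule span_base[OF n1])
  have B: "symE a z \<in> S" and A: "symE a a \<in> S" if "a \<noteq> z" for a
  proof -
    have P: "2 *\<^sub>R outer (f a) \<in> S" using o3[OF fx[OF that]] by (simp add: span_real_mul S_def)
    have F: "symE a a - symE a z \<in> S" using n2[OF that] symE_comm[of z a]
      by (simp add: S_def span_base)
    have eq: "(1 - 2*x$a) *\<^sub>R symE a z = 2 *\<^sub>R outer (f a) - (symE a a - symE a z) - (x$a^2) *\<^sub>R symE z z"
      unfolding f_def I1[OF that] by (simp add: algebra_simps)
    have "(1 - 2*x$a) *\<^sub>R symE a z \<in> S"
      unfolding eq S_def
      by (rule span_diff[OF span_diff[OF P[unfolded S_def] F[unfolded S_def]] span_real_mul[OF Z[unfolded S_def]]])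
    then have "(1 / (1 - 2*x$a)) *\<^sub>R ((1 - 2*x$a) *\<^sub>R symE a z) \<in> S"
      unfolding S_def by (rule span_real_mul)
    moreover have "1 - 2*x$a \<noteq> 0" using xb[rule_format, of a] by auto
    ultimately show Bz: "symE a z \<in> S" by simp
    show "symE a a \<in> S" using span_add[OF F[unfolded S_def] Bz[unfolded S_def]] by (simp add: S_def)
  qed
  have all: "symE a b \<in> S" for a b
  proof (cases "a = z")
    case True
    then show ?thesis
    proof (cases "b = z")
      case True then show ?thesis using Z \<open>a = z\<close> by simp
    next
      case False then show ?thesis using B[OF False] symE_comm[of a b] \<open>a = z\<close> by simp
    qed
  next
    case az: False
    show ?thesis
    proof (cases "b = z")
      case True then show ?thesis using B[OF az] by simp
    next
      case bz: False
      show ?thesis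
      proof (cases "a = b")
        case True then show ?thesis using A[OF az] by simp
      next
        case ab: False
        have eq: "symE a b = outer (f a + f b) - outer (f a) - outer (f b)
            + x$b *\<^sub>R symE a z + x$a *\<^sub>R symE b z - (x$a * x$b) *\<^sub>R symE z z"
          unfolding f_def I2[OF az bz ab] by (simp add: algebra_simps)
        show ?thesis unfolding eq S_def
          by (rule span_diff[OF span_add[OF span_add[OF span_diff[OF span_diff[OF
               o3[OF fx2[OF az bz], unfolded S_def] o3[OF fx[OF az], unfolded S_def]]
               o3[OF fx[OF bz], unfolded S_def]] span_real_mul[OF B[OF az, unfolded S_def]]]
               span_real_mul[OF B[OF bz, unfolded S_def]]] span_real_mul[OF Z[unfolded S_def]]])
      qed
    qed
  qed
  have symS: "sym_mats \<subseteq> S"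
  proof
    fix M :: "real^'n^'n" assume "M \<in> sym_mats"
    then have "M = (\<Sum>a\<in>UNIV. \<Sum>b\<in>UNIV. (M$a$b / 2) *\<^sub>R symE a b)" by (rule sym_decomp)
    also have "\<dots> \<in> S" unfolding S_def
      using all unfolding S_def by (intro span_sum span_real_mul) auto
    finally show "M \<in> S" .
  qed
  have spanN: "span N = sym_mats"
    by (rule span_subspace[OF NS symS[unfolded S_def] subspace_sym])
  have "0 \<in> N" by (rule inN) (auto simp: sym_iff)
  then have "0 \<in> affine hull N" by (rule hull_inc)
  then have "aff_dim N = int (dim N)" by (rule aff_dim_zero)
  also have "dim N = dim (sym_mats :: (real^'n^'n) set)" using dim_span[of N] unfolding spanN by (rule sym)
  finally show ?thesis unfolding is_vertex_def N_def using XC by simp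
qed



lemma congr_psd:
  fixes X M :: "real^'n^'n"
  assumes "psd X"
  shows "psd (transpose M ** X ** M)"
proof -
  have sX: "transpose X = X" using assms by (simp add: psd_def)
  have t: "transpose (transpose M ** X ** M) = transpose M ** X ** M"
    by (simp add: matrix_transpose_mul sX matrix_mul_assoc)
  have "0 \<le> v \<bullet> ((transpose M ** X ** M) *v v)" for v
  proof -
    have "(transpose M ** X ** M) *v v = transpose M *v (X *v (M *v v))"
      by (simp add: matrix_vector_mul_assoc matrix_mul_assoc)
    then have "v \<bullet> ((transpose M ** X ** M) *v v) = (M *v v) \<bullet> (X *v (M *v v))"
      using dot_lmul_matrix[of "X *v (M *v v)" M v]
      by (simp add: transpose_matrix_vector inner_commute)
    also have "0 \<le> \<dots>" using assms by (simp add: psd_def)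
    finally show ?thesis by simp
  qed
  then show ?thesis using t by (simp add: psd_def)
qed

lemma tmm_entry:
  fixes A B C :: "real^'n^'n"
  shows "(transpose A ** B ** C)$a$b = column a A \<bullet> (B *v column b C)"
proof -
  have "(transpose A ** B ** C)$a$b = (\<Sum>k\<in>UNIV. (\<Sum>l\<in>UNIV. A$l$a * B$l$k) * C$k$b)"
    by (simp add: matrix_matrix_mult_def transpose_def)
  also have "\<dots> = (\<Sum>k\<in>UNIV. \<Sum>l\<in>UNIV. A$l$a * B$l$k * C$k$b)"
    by (simp add: sum_distrib_right)
  also have "\<dots> = (\<Sum>l\<in>UNIV. \<Sum>k\<in>UNIV. A$l$a * B$l$k * C$k$b)"
    by (rule sum.swap)
  also have "\<dots> = (\<Sum>l\<in>UNIV. A$l$a * (\<Sum>k\<in>UNIV. B$l$k * C$k$b))"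
    by (simp add: sum_distrib_left mult.assoc)
  also have "\<dots> = column a A \<bullet> (B *v column b C)"
    by (simp add: matrix_vector_mult_def column_def inner_vec_def)
  finally show ?thesis .
qed


lemma not_vertex:
  fixes X :: "real^'n^'n"
  assumes Ep: "Ep \<subseteq> {e. e \<subseteq> UNIV - {z} \<and> card e = 2}"
    and Em: "Em \<subseteq> {e. e \<subseteq> UNIV - {z} \<and> card e = 2}"
    and XC: "X \<in> Chat z Ep Em" and r: "rank X \<noteq> 1"
  shows "\<not> is_vertex sym_mats (Chat z Ep Em) X"
proof -
  have pX: "psd X" using XC by (simp add: Chat_def)
  have Xs: "X$a$b = X$b$a" for a b using XC by (rule Chat_sym)
  have Xzz: "X$z$z = 1" using XC by (simp add: Chat_def)
  have Xd: "X$l$l = X$z$l" if "l \<noteq> z" for l using XC that by (simp add: Chat_def)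
  obtain j k where jk: "X$k$j \<noteq> X$k$z * X$z$j"
  proof -
    have "\<exists>j k. X$k$j \<noteq> X$k$z * X$z$j"
    proof (rule ccontr)
      assume "\<not> (\<exists>j k. X$k$j \<noteq> X$k$z * X$z$j)"
      then have h: "\<forall>j k. X$k$j = X$k$z * X$z$j" by blast
      have "\<forall>k j. X$k$j = (\<chi> k. X$k$z)$k * (X$z)$j"
        unfolding vec_lambda_beta using h by blast
      then have "rank X \<le> 1" by (rule rank_le1)
      moreover have "rank X \<noteq> 0" using Xzz by (intro rank_ne0[of X z z]) simp
      ultimately show False using r by simp
    qed
    then show ?thesis using that by blast
  qed
  define \<gamma> :: "real^'n" where "\<gamma> = axis j 1 - X$z$j *\<^sub>R axis z 1"
  define g where "g = X *v \<gamma>"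
  have g_nth: "g$l = X$l$j - X$z$j * X$l$z" for l
  proof -
    have "g = X *v axis j 1 - X$z$j *\<^sub>R (X *v axis z 1)"
      by (simp only: g_def \<gamma>_def matrix_vector_mult_diff_distrib matrix_vector_mult_scaleR)
    then show ?thesis by (simp add: mv_axis)
  qed
  have gz: "g$z = 0" using Xzz by (simp add: g_nth)
  have gk: "g$k \<noteq> 0" using jk by (simp add: g_nth mult.commute)
  have kz: "k \<noteq> z" using gz gk by auto
  define q where "q = \<gamma> \<bullet> g"
  have q0: "0 \<le> q" using pX by (simp add: q_def g_def psd_def)
  have qpos: "0 < q"
  proof -
    have "q \<noteq> 0"
    proof
      assume "q = 0"
      then have "g = 0" unfolding g_def by (intro psd_zero_form[OF pX]) (simp add: q_def g_def)
      then show False using gk by simp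
    qed
    then show ?thesis using q0 by simp
  qed
  have Xkk: "X$k$k \<noteq> 0"
  proof
    assume "X$k$k = 0"
    then have "X$k$l = 0" for l by (rule psd_zero_diag[OF pX])
    then show False using gk by (simp add: g_nth)
  qed
  define al where "al s = (q - s^2)/(q + s^2)" for s :: real
  define be where "be s = (2 * s) / (q + s^2)" for s :: real
  define h where "h l s = al s * X$l$l + be s * g$l" for l s
  define cf where "cf l s = h l s / X$l$l" for l s
  define mz where "mz s = al s *\<^sub>R axis z 1 + be s *\<^sub>R \<gamma>" for s
  define col where "col s b = (if b = z then mz s else cf b s *\<^sub>R axis b 1)" for s b
  define M where "M s = (\<chi> a b. col s b $ a)" for s
  define E where "E s = (\<chi> a b. if a = z \<and> b = z then 1 else if a = z then cf b s * h b s
      else if b = z then cf a s * h a s else cf a s * cf b s * X$a$b)" for s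
  have tX: "transpose X = X" using pX by (simp add: psd_def)
  have qne: "q + s^2 > 0" for s :: real using qpos by (simp add: add_pos_nonneg)
  have ab1: "(al s)^2 + (be s)^2 * q = 1" for s
  proof -
    have "(q + s^2)^2 * ((al s)^2 + (be s)^2 * q) = (q - s^2)^2 + (2 * s)^2 * q"
      using qne[of s] by (simp add: al_def be_def power_divide field_simps)
    also have "\<dots> = (q + s^2)^2" by (simp add: power2_eq_square algebra_simps)
    finally show ?thesis using qne[of s] by simp
  qed
  have al0: "al 0 = 1" using qpos by (simp add: al_def)
  have be0: "be 0 = 0" by (simp add: be_def)
  have Xmz_eq: "X *v mz s = al s *\<^sub>R (X *v axis z 1) + be s *\<^sub>R g" for s
    by (simp only: mz_def g_def matrix_vector_right_distrib matrix_vector_mult_scaleR)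
  have Xmz_z: "(X *v mz s)$z = al s" for s
    unfolding Xmz_eq using Xzz gz by (simp add: mv_axis)
  have Xmz: "(X *v mz s)$l = h l s" if "l \<noteq> z" for l s
    unfolding Xmz_eq h_def using Xd[OF that] Xs[of l z] by (simp add: mv_axis)
  have mXm: "mz s \<bullet> (X *v mz s) = 1" for s
  proof -
    have "\<gamma> \<bullet> (X *v axis z 1) = axis z 1 \<bullet> (X *v \<gamma>)" by (rule sym_form[OF tX])
    also have "\<dots> = 0" using gz by (simp add: g_def[symmetric] inner_axis')
    finally have gz': "\<gamma> \<bullet> (X *v axis z 1) = 0" .
    have "mz s \<bullet> (X *v mz s) = al s * (X *v mz s)$z + be s * (\<gamma> \<bullet> (X *v mz s))"
      by (simp add: mz_def inner_add_left inner_axis')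
    also have "\<gamma> \<bullet> (X *v mz s) = be s * q"
      unfolding Xmz_eq using gz' by (simp add: inner_add_right q_def)
    finally show ?thesis using Xmz_z ab1[of s] by (simp add: power2_eq_square algebra_simps)
  qed
  have colM: "column b (M s) = col s b" for s b
    by (simp add: column_def M_def vec_eq_iff)
  have E_eq: "transpose (M s) ** X ** M s = E s" for s
  proof -
    have "(transpose (M s) ** X ** M s) $ a $ b = E s $ a $ b" for a b
    proof -
      have "(transpose (M s) ** X ** M s) $ a $ b = col s a \<bullet> (X *v col s b)"
        by (simp add: tmm_entry colM)
      also have "\<dots> = E s $ a $ b"
      proof (cases "a = z")
        case az: True
        show ?thesis
        proof (cases "b = z")
          case True then show ?thesis using az mXm by (simp add: col_def E_def)
        next
          case bz: False
          have "mz s \<bullet> (X *v axis b 1) = axis b 1 \<bullet> (X *v mz s)" by (rule sym_form[OF tX])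
          also have "\<dots> = h b s" using Xmz[OF bz] by (simp add: inner_axis')
          finally show ?thesis using az bz
            by (simp add: col_def E_def matrix_vector_mult_scaleR)
        qed
      next
        case az: False
        show ?thesis
        proof (cases "b = z")
          case True then show ?thesis using az Xmz[OF az]
            by (simp add: col_def E_def inner_axis')
        next
          case bz: False
          show ?thesis using az bz
            by (simp add: col_def E_def matrix_vector_mult_scaleR inner_axis' mv_axis)
        qed
      qed
      finally show ?thesis .
    qed
    then show ?thesis by (simp add: vec_eq_iff)
  qed
  have Ezz: "E s $ z $ z = 1" for s by (simp add: E_def)
  have Ezb: "E s $ z $ b = cf b s * h b s" if "b \<noteq> z" for s b using that by (simp add: E_def)
  have Eaz: "E s $ a $ z = cf a s * h a s" if "a \<noteq> z" for s a using that by (simp add: E_def)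
  have Eab: "E s $ a $ b = cf a s * cf b s * X$a$b" if "a \<noteq> z" "b \<noteq> z" for s a b
    using that by (simp add: E_def)
  have cfh: "cf l s * X$l$l = h l s" if "X$l$l \<noteq> 0" for l s using that by (simp add: cf_def)
  have cf0: "cf l s = 0" if "X$l$l = 0" for l s using that by (simp add: cf_def)
  have Ep2: "a \<noteq> z \<and> b \<noteq> z" if "{a, b} \<in> Ep" for a b using Ep that by auto
  have Em2: "a \<noteq> z \<and> b \<noteq> z" if "{a, b} \<in> Em" for a b using Em that by auto
  have E_in: "E s \<in> Chat z Ep Em" if cpos: "\<forall>l. l \<noteq> z \<longrightarrow> 0 \<le> cf l s" for s
  proof -
    have "psd (E s)" unfolding E_eq[symmetric] by (rule congr_psd[OF pX])
    moreover have "E s $ l $ l = E s $ z $ l" if "l \<noteq> z" for l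
    proof (cases "X$l$l = 0")
      case True then show ?thesis using that by (simp add: Eab Ezb cf0)
    next
      case False
      have "E s $ l $ l = cf l s * (cf l s * X$l$l)" using that by (simp add: Eab mult.assoc)
      also have "\<dots> = E s $ z $ l" using that cfh[OF False] by (simp add: Ezb)
      finally show ?thesis .
    qed
    moreover have "0 \<le> E s $ a $ b" if "{a, b} \<in> Ep" for a b
    proof -
      have "0 \<le> X$a$b" using XC that by (simp add: Chat_def)
      then show ?thesis using Ep2[OF that] cpos by (simp add: Eab)
    qed
    moreover have "E s $ a $ b \<le> 0" if "{a, b} \<in> Em" for a b
    proof -
      have "X$a$b \<le> 0" using XC that by (simp add: Chat_def)
      moreover have "0 \<le> cf a s * cf b s" using Em2[OF that] cpos by simp
      ultimately show ?thesis using Em2[OF that] by (simp add: Eab mult_nonneg_nonpos)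
    qed
    ultimately show ?thesis by (simp add: Chat_def Ezz)
  qed
  have E0: "E 0 = X"
  proof -
    have h0: "h l 0 = X$l$l" for l by (simp add: h_def al0 be0)
    have "E 0 $ a $ b = X $ a $ b" for a b
    proof (cases "a = z")
      case az: True
      show ?thesis
      proof (cases "b = z")
        case True then show ?thesis using az Xzz by (simp add: Ezz)
      next
        case bz: False
        have "E 0 $ z $ b = X$b$b"
          using bz by (cases "X$b$b = 0") (simp_all add: Ezb cf0 h0 cf_def)
        then show ?thesis using az Xd[OF bz] by simp
      qed
    next
      case az: False
      show ?thesis
      proof (cases "b = z")
        case bz: True
        have "E 0 $ a $ z = X$a$a"
          using az by (cases "X$a$a = 0") (simp_all add: Eaz cf0 h0 cf_def)
        then show ?thesis using bz Xd[OF az] Xs[of a z] by simp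
      next
        case bz: False
        show ?thesis
        proof (cases "X$a$a = 0 \<or> X$b$b = 0")
          case True
          then have "X$a$b = 0" using psd_zero_diag[OF pX, of a b] psd_zero_diag[OF pX, of b a] Xs[of a b]
            by auto
          then show ?thesis using az bz by (simp add: Eab)
        next
          case False
          then show ?thesis using az bz by (simp add: Eab cf_def h0)
        qed
      qed
    qed
    then show ?thesis by (simp add: vec_eq_iff)
  qed
  have h0: "h l 0 = X$l$l" for l by (simp add: h_def al0 be0)
  have hlim: "(h l \<longlongrightarrow> X$l$l) (at 0)" for l
  proof -
    have "((\<lambda>s. (q - s^2)/(q + s^2) * X$l$l + (2 * s)/(q + s^2) * g$l) \<longlongrightarrow>
        (q - 0^2)/(q + 0^2) * X$l$l + (2 * 0)/(q + 0^2) * g$l) (at 0)"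
      using qpos by (intro tendsto_intros) auto
    moreover have "(\<lambda>s. (q - s^2)/(q + s^2) * X$l$l + (2 * s)/(q + s^2) * g$l) = h l"
      by (rule ext) (simp add: h_def al_def be_def)
    ultimately show ?thesis using qpos by simp
  qed
  have ev1: "eventually (\<lambda>s. l \<noteq> z \<longrightarrow> 0 \<le> cf l s) (at (0::real))" for l
  proof (cases "X$l$l = 0")
    case True then show ?thesis by (simp add: cf0)
  next
    case False
    then have "0 < X$l$l" using psd_diag[OF pX, of l] by simp
    then have "eventually (\<lambda>s. 0 < h l s) (at 0)" using hlim[of l] by (rule order_tendstoD(1)[rotated])
    then show ?thesis
      by eventually_elim (use \<open>0 < X$l$l\<close> in \<open>simp add: cf_def\<close>)
  qed
  have "eventually (\<lambda>s. \<forall>l. l \<noteq> z \<longrightarrow> 0 \<le> cf l s) (at (0::real))"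
    by (rule eventually_all_finite) (rule ev1)
  then obtain d where d: "d > 0" "\<forall>s. s \<noteq> 0 \<and> dist s 0 < d \<longrightarrow> (\<forall>l. l \<noteq> z \<longrightarrow> 0 \<le> cf l s)"
    unfolding eventually_at by auto
  have Ein: "E s \<in> Chat z Ep Em" if "\<bar>0 - s\<bar> < d" for s
  proof (cases "s = 0")
    case True
    then show ?thesis using XC E0 by simp
  next
    case False
    then show ?thesis using d that by (intro E_in) (simp add: dist_real_def)
  qed
  have dal: "(al has_real_derivative 0) (at 0)"
  proof -
    have "((\<lambda>s. (q - s^2)/(q + s^2)) has_real_derivative 0) (at 0)"
      using qpos by (auto intro!: derivative_eq_intros)
    moreover have "(\<lambda>s. (q - s^2)/(q + s^2)) = al" by (rule ext) (simp add: al_def)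
    ultimately show ?thesis by simp
  qed
  have dbe: "(be has_real_derivative 2/q) (at 0)"
  proof -
    have "((\<lambda>s. (2 * s)/(q + s^2)) has_real_derivative 2/q) (at 0)"
      using qpos by (auto intro!: derivative_eq_intros simp: power2_eq_square)
    moreover have "(\<lambda>s. (2 * s)/(q + s^2)) = be" by (rule ext) (simp add: be_def)
    ultimately show ?thesis by simp
  qed
  have dh: "(h l has_real_derivative 2/q * g$l) (at 0)" for l
  proof -
    have "((\<lambda>s. al s * X$l$l + be s * g$l) has_real_derivative 0 * X$l$l + 2/q * g$l) (at 0)"
      by (intro DERIV_add DERIV_cmult_right dal dbe)
    moreover have "(\<lambda>s. al s * X$l$l + be s * g$l) = h l" by (rule ext) (simp add: h_def)
    ultimately show ?thesis by simp
  qed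
  have dcf: "(cf l has_real_derivative (2/q * g$l) / X$l$l) (at 0)" for l
  proof -
    have "((\<lambda>s. h l s / X$l$l) has_real_derivative (2/q * g$l) / X$l$l) (at 0)"
      by (intro DERIV_cdivide dh)
    moreover have "(\<lambda>s. h l s / X$l$l) = cf l" by (rule ext) (simp add: cf_def)
    ultimately show ?thesis by simp
  qed
  have dE: "\<exists>D. ((\<lambda>s. E s $ a $ b) has_real_derivative D) (at 0)" for a b
  proof (cases "a = z")
    case az: True
    show ?thesis
    proof (cases "b = z")
      case True
      then have "(\<lambda>s. E s $ a $ b) = (\<lambda>s. 1)" using az by (simp add: Ezz)
      then show ?thesis by (auto intro: DERIV_const)
    next
      case bz: False
      then have "(\<lambda>s. E s $ a $ b) = (\<lambda>s. cf b s * h b s)" using az by (simp add: Ezb)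
      then show ?thesis using DERIV_mult[OF dcf[of b] dh[of b]] by auto
    qed
  next
    case az: False
    show ?thesis
    proof (cases "b = z")
      case True
      then have "(\<lambda>s. E s $ a $ b) = (\<lambda>s. cf a s * h a s)" using az by (simp add: Eaz)
      then show ?thesis using DERIV_mult[OF dcf[of a] dh[of a]] by auto
    next
      case bz: False
      then have "(\<lambda>s. E s $ a $ b) = (\<lambda>s. cf a s * cf b s * X$a$b)" using az by (simp add: Eab)
      then show ?thesis using DERIV_cmult_right[OF DERIV_mult[OF dcf[of a] dcf[of b]], of "X$a$b"]
        by auto
    qed
  qed
  define Dm where "Dm = (\<chi> a b. deriv (\<lambda>s. E s $ a $ b) 0)"
  have dE': "((\<lambda>s. E s $ a $ b) has_real_derivative Dm $ a $ b) (at 0)" for a b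
    using dE[of a b] by (simp add: Dm_def DERIV_deriv_iff_has_field_derivative)
  have Esym: "E s $ a $ b = E s $ b $ a" for s a b
    using Xs[of a b] by (simp add: E_def mult_ac)
  have Dsym: "Dm \<in> sym_mats"
    unfolding sym_iff Dm_def using Esym by simp
  have Dzk: "Dm $ z $ k \<noteq> 0"
  proof -
    have "(\<lambda>s. E s $ z $ k) = (\<lambda>s. cf k s * h k s)" using kz by (simp add: Ezb)
    then have "((\<lambda>s. E s $ z $ k) has_real_derivative
        (2/q * g$k) / X$k$k * h k 0 + 2/q * g$k * cf k 0) (at 0)"
      using DERIV_mult[OF dcf[of k] dh[of k]] by simp
    then have "Dm $ z $ k = (2/q * g$k) / X$k$k * h k 0 + 2/q * g$k * cf k 0"
      using dE'[of z k] DERIV_unique by blast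
    also have "\<dots> = 4/q * g$k" using Xkk by (simp add: h0 cf_def)
    finally show ?thesis using qpos gk by simp
  qed
  define N where "N = normal_cone sym_mats (Chat z Ep Em) X"
  have NS: "N \<subseteq> sym_mats" by (auto simp: N_def normal_cone_def)
  have orth: "c \<bullet> Dm = 0" if cN: "c \<in> N" for c
  proof -
    have le: "c \<bullet> Y \<le> c \<bullet> X" if "Y \<in> Chat z Ep Em" for Y
      using cN that by (auto simp: N_def normal_cone_def)
    have fe: "(\<lambda>s. c \<bullet> E s) = (\<lambda>s. \<Sum>a\<in>UNIV. \<Sum>b\<in>UNIV. c$a$b * E s $ a $ b)"
      by (rule ext) (simp add: inner_mat)
    have "((\<lambda>s. \<Sum>a\<in>UNIV. \<Sum>b\<in>UNIV. c$a$b * E s $ a $ b) has_real_derivative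
        (\<Sum>a\<in>UNIV. \<Sum>b\<in>UNIV. c$a$b * Dm $ a $ b)) (at 0)"
      by (intro DERIV_sum DERIV_cmult dE')
    then have "((\<lambda>s. c \<bullet> E s) has_real_derivative c \<bullet> Dm) (at 0)"
      unfolding fe by (simp add: inner_mat)
    moreover have "\<forall>y. \<bar>0 - y\<bar> < d \<longrightarrow> c \<bullet> E y \<le> c \<bullet> E 0"
      using le Ein E0 by simp
    ultimately show ?thesis by (rule DERIV_local_max[OF _ d(1)])
  qed
  have spanN: "span N \<subseteq> {c. Dm \<bullet> c = 0}"
    by (rule span_minimal[OF _ subspace_hyperplane]) (use orth in \<open>auto simp: inner_commute\<close>)
  have DnN: "Dm \<notin> span N"
  proof
    assume "Dm \<in> span N"
    then have "Dm \<bullet> Dm = 0" using spanN by auto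
    then have "Dm = 0" by simp
    then show False using Dzk by simp
  qed
  have ss: "span (sym_mats :: (real^'n^'n) set) = sym_mats"
    using span_eq_iff subspace_sym by blast
  have "span N \<subset> span (sym_mats :: (real^'n^'n) set)"
  proof -
    have "span N \<subseteq> sym_mats" by (rule span_minimal[OF NS subspace_sym])
    then show ?thesis unfolding ss using Dsym DnN by auto
  qed
  then have dlt: "dim N < dim (sym_mats :: (real^'n^'n) set)" by (rule dim_psubset)
  have "0 \<in> N" using NS by (auto simp: N_def normal_cone_def sym_iff)
  then have "0 \<in> affine hull N" by (rule hull_inc)
  then have "aff_dim N = int (dim N)" by (rule aff_dim_zero)
  then show ?thesis using dlt unfolding is_vertex_def N_def by simp
qed

theorem theorem3p1:
  fixes z :: "'n::finite" and Ep Em :: "'n set set" and X :: "real^'n^'n"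
  assumes "Ep \<subseteq> {e. e \<subseteq> UNIV - {z} \<and> card e = 2}"
    and "Em \<subseteq> {e. e \<subseteq> UNIV - {z} \<and> card e = 2}"
    and "X \<in> Chat z Ep Em"
  shows "is_vertex sym_mats (Chat z Ep Em) X \<longleftrightarrow> rank X = 1"
proof
  assume v: "is_vertex sym_mats (Chat z Ep Em) X"
  show "rank X = 1"
  proof (rule ccontr)
    assume "rank X \<noteq> 1"
    then have "\<not> is_vertex sym_mats (Chat z Ep Em) X" by (rule not_vertex[OF assms])
    then show False using v by simp
  qed
next
  assume r: "rank X = 1"
  obtain x where "x$z = 1" "\<forall>i j. X$i$j = x$i * x$j" "\<forall>i. x$i = 0 \<or> x$i = 1"
    using rank1_factor[OF r assms(3)] by metis
  then show "is_vertex sym_mats (Chat z Ep Em) X" by (rule vertex_if_rank1[OF assms(3)])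
qed

end
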